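(* Let $\Sigma_A,\Sigma_B,\Sigma$ be finite nonempty sets and $(X_A,X_B,Y)$ random variables with values in $\Sigma_A\times\Sigma_B\times\Sigma$, all marginal probabilities positive, with $X_A,X_B$ independent conditional on $Y$. Let $PS:\Sigma_B\times\Delta_{\Sigma_B}\to\mathbb{R}$ be a proper scoring rule. For $h_A:\Sigma_A\to\Delta_\Sigma$ and $v_B:\Sigma_B\to[0,1]^\Sigma$ with $\sum_{x_B\in\Sigma_B}v_B(x_B)=(1,\dots,1)$, define the expected $PS$-gain $$G_{PS}(h_A,v_B):=\sum_{x_A,x_B}\Pr[X_A=x_A,X_B=x_B]\,PS\Big(x_B,\big(v_B(x_B')\cdot h_A(x_A)\big)_{x_B'\in\Sigma_B}\Big).$$ Then $v_B^*(x_B)=(\Pr[X_B=x_B\mid Y=y])_{y\in\Sigma}$, $h_A^*(x_A)=(\Pr[Y=y\mid X_A=x_A])_{y\in\Sigma}$ is a maximizer of $G_{PS}$ over all such pairs $(h_A,v_B)$.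
   Context: $\Delta_S$ denotes the set of probability vectors on a finite set $S$; $\cdot$ is the dot product in $\mathbb{R}^\Sigma$. A scoring rule $PS:\Sigma_B\times\Delta_{\Sigma_B}\to\mathbb{R}$ is proper if for all $\mathbf{p},\mathbf{q}\in\Delta_{\Sigma_B}$, $\sum_{\sigma}\mathbf{p}(\sigma)PS(\sigma,\mathbf{q})\le\sum_\sigma\mathbf{p}(\sigma)PS(\sigma,\mathbf{p})$. The constraint on $v_B$ ensures $(v_B(x_B')\cdot h_A(x_A))_{x_B'}\in\Delta_{\Sigma_B}$. *)

theory Defs
  imports "HOL-Probability.Probability"
begin

text \<open>Random variables (X_A, X_B, Y) with values in the finite nonempty types
  'a, 'b, 'c, given by their joint distribution M.\<close>

definition prob_simplex :: "('s::finite \<Rightarrow> real) set" where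
  "prob_simplex = {q. (\<forall>s. 0 \<le> q s) \<and> (\<Sum>s\<in>UNIV. q s) = 1}"

definition proper_scoring_rule :: "('b::finite \<Rightarrow> ('b \<Rightarrow> real) \<Rightarrow> real) \<Rightarrow> bool" where
  "proper_scoring_rule PS \<longleftrightarrow>
     (\<forall>p\<in>prob_simplex. \<forall>q\<in>prob_simplex.
        (\<Sum>\<sigma>\<in>UNIV. p \<sigma> * PS \<sigma> q) \<le> (\<Sum>\<sigma>\<in>UNIV. p \<sigma> * PS \<sigma> p))"

definition PrA :: "('a \<times> 'b \<times> 'c) pmf \<Rightarrow> 'a \<Rightarrow> real" where
  "PrA M a = measure_pmf.prob M {w. fst w = a}"
definition PrB :: "('a \<times> 'b \<times> 'c) pmf \<Rightarrow> 'b \<Rightarrow> real" where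
  "PrB M b = measure_pmf.prob M {w. fst (snd w) = b}"
definition PrY :: "('a \<times> 'b \<times> 'c) pmf \<Rightarrow> 'c \<Rightarrow> real" where
  "PrY M y = measure_pmf.prob M {w. snd (snd w) = y}"
definition PrAB :: "('a \<times> 'b \<times> 'c) pmf \<Rightarrow> 'a \<Rightarrow> 'b \<Rightarrow> real" where
  "PrAB M a b = measure_pmf.prob M {w. fst w = a \<and> fst (snd w) = b}"
definition PrAY :: "('a \<times> 'b \<times> 'c) pmf \<Rightarrow> 'a \<Rightarrow> 'c \<Rightarrow> real" where
  "PrAY M a y = measure_pmf.prob M {w. fst w = a \<and> snd (snd w) = y}"
definition PrBY :: "('a \<times> 'b \<times> 'c) pmf \<Rightarrow> 'b \<Rightarrow> 'c \<Rightarrow> real" where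
  "PrBY M b y = measure_pmf.prob M {w. fst (snd w) = b \<and> snd (snd w) = y}"
definition PrABY :: "('a \<times> 'b \<times> 'c) pmf \<Rightarrow> 'a \<Rightarrow> 'b \<Rightarrow> 'c \<Rightarrow> real" where
  "PrABY M a b y = measure_pmf.prob M {w. w = (a, b, y)}"

definition cond_indep :: "('a \<times> 'b \<times> 'c) pmf \<Rightarrow> bool" where
  "cond_indep M \<longleftrightarrow> (\<forall>a b y.
     PrABY M a b y / PrY M y = (PrAY M a y / PrY M y) * (PrBY M b y / PrY M y))"

definition admissible_hA :: "('a \<Rightarrow> 'c::finite \<Rightarrow> real) \<Rightarrow> bool" where
  "admissible_hA hA \<longleftrightarrow> (\<forall>a. hA a \<in> prob_simplex)"
definition admissible_vB :: "('b::finite \<Rightarrow> 'c::finite \<Rightarrow> real) \<Rightarrow> bool" where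
  "admissible_vB vB \<longleftrightarrow> (\<forall>b y. 0 \<le> vB b y \<and> vB b y \<le> 1) \<and>
     (\<forall>y. (\<Sum>b\<in>UNIV. vB b y) = 1)"

definition G_PS :: "('b::finite \<Rightarrow> ('b \<Rightarrow> real) \<Rightarrow> real) \<Rightarrow> ('a::finite \<times> 'b \<times> 'c::finite) pmf
    \<Rightarrow> ('a \<Rightarrow> 'c \<Rightarrow> real) \<Rightarrow> ('b \<Rightarrow> 'c \<Rightarrow> real) \<Rightarrow> real" where
  "G_PS PS M hA vB = (\<Sum>a\<in>UNIV. \<Sum>b\<in>UNIV.
      PrAB M a b * PS b (\<lambda>b'. \<Sum>y\<in>UNIV. vB b' y * hA a y))"

definition vB_star :: "('a \<times> 'b \<times> 'c) pmf \<Rightarrow> 'b \<Rightarrow> 'c \<Rightarrow> real" where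
  "vB_star M b y = PrBY M b y / PrY M y"
definition hA_star :: "('a \<times> 'b \<times> 'c) pmf \<Rightarrow> 'a \<Rightarrow> 'c \<Rightarrow> real" where
  "hA_star M a y = PrAY M a y / PrA M a"

end

theory Submission
  imports Defs
begin

lemma sum_triple:
  "sum f (UNIV::('a::finite \<times> 'b::finite \<times> 'c::finite) set) = (\<Sum>a\<in>UNIV. \<Sum>b\<in>UNIV. \<Sum>y\<in>UNIV. f (a,b,y))"
  by (simp add: UNIV_Times_UNIV[symmetric] sum.cartesian_product del: UNIV_Times_UNIV)

lemma prob_sum:
  fixes M :: "('a::finite \<times> 'b::finite \<times> 'c::finite) pmf"
  shows "measure_pmf.prob M S = (\<Sum>a\<in>UNIV. \<Sum>b\<in>UNIV. \<Sum>y\<in>UNIV. if (a,b,y) \<in> S then pmf M (a,b,y) else 0)"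
proof -
  have "measure_pmf.prob M S = sum (pmf M) S"
    by (simp add: measure_measure_pmf_finite)
  also have "\<dots> = (\<Sum>w\<in>UNIV. if w \<in> S then pmf M w else 0)"
    by (simp add: sum.If_cases)
  also have "\<dots> = (\<Sum>a\<in>UNIV. \<Sum>b\<in>UNIV. \<Sum>y\<in>UNIV. if (a,b,y) \<in> S then pmf M (a,b,y) else 0)"
    by (rule sum_triple)
  finally show ?thesis .
qed

lemma if_conj_split: "(if P \<and> Q then x else (0::real)) = (if P then (if Q then x else 0) else 0)"
  by simp

lemma sum_if_out: "(\<Sum>x\<in>S. if P then f x else (0::real)) = (if P then (\<Sum>x\<in>S. f x) else 0)"
  by simp

lemma Pr_eqs:
  fixes M :: "('a::finite \<times> 'b::finite \<times> 'c::finite) pmf"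
  shows "PrABY M a b y = pmf M (a,b,y)"
    "PrAY M a y = (\<Sum>b\<in>UNIV. pmf M (a,b,y))"
    "PrBY M b y = (\<Sum>a\<in>UNIV. pmf M (a,b,y))"
    "PrAB M a b = (\<Sum>y\<in>UNIV. pmf M (a,b,y))"
    "PrA M a = (\<Sum>b\<in>UNIV. \<Sum>y\<in>UNIV. pmf M (a,b,y))"
    "PrY M y = (\<Sum>a\<in>UNIV. \<Sum>b\<in>UNIV. pmf M (a,b,y))"
  unfolding PrABY_def PrAY_def PrBY_def PrAB_def PrA_def PrY_def prob_sum
  by (simp_all add: if_conj_split sum_if_out sum.delta sum.delta')

lemma marg:
  fixes M :: "('a::finite \<times> 'b::finite \<times> 'c::finite) pmf"
  shows "(\<Sum>y\<in>UNIV. PrAY M a y) = PrA M a"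
    "(\<Sum>b\<in>UNIV. PrBY M b y) = PrY M y"
    "(\<Sum>b\<in>UNIV. PrAB M a b) = PrA M a"
    "(\<Sum>b\<in>UNIV. PrABY M a b y) = PrAY M a y"
  unfolding Pr_eqs
     apply (rule sum.swap)
    apply (rule sum.swap)
   apply simp
  apply simp
  done

theorem mainTheorem8:
  fixes M :: "('a::finite \<times> 'b::finite \<times> 'c::finite) pmf"
    and PS :: "'b \<Rightarrow> ('b \<Rightarrow> real) \<Rightarrow> real"
  assumes "\<forall>a. PrA M a > 0" and "\<forall>b. PrB M b > 0" and "\<forall>y. PrY M y > 0"
    and "cond_indep M"
    and "proper_scoring_rule PS"
  shows "admissible_hA (hA_star M) \<and> admissible_vB (vB_star M) \<and>
    (\<forall>hA vB. admissible_hA hA \<and> admissible_vB vB \<longrightarrow>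
       G_PS PS M hA vB \<le> G_PS PS M (hA_star M) (vB_star M))"
proof -
  have nn: "0 \<le> pmf M w" for w by simp
  have A1: "admissible_hA (hA_star M)"
    unfolding admissible_hA_def prob_simplex_def mem_Collect_eq
  proof (intro allI conjI)
    fix a y
    show "0 \<le> hA_star M a y" unfolding hA_star_def using assms(1)[rule_format, of a] by (simp add: PrAY_def less_imp_le)
    show "(\<Sum>y\<in>UNIV. hA_star M a y) = 1" unfolding hA_star_def
      using assms(1)[rule_format, of a] by (simp add: sum_divide_distrib[symmetric] marg)
  qed
  have le1: "PrBY M b y \<le> PrY M y" for b y
    unfolding Pr_eqs by (rule sum_mono) (rule member_le_sum, auto)
  have A2: "admissible_vB (vB_star M)"
    unfolding admissible_vB_def
  proof (intro allI conjI)
    fix b y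
    have p: "0 < PrY M y" using assms(3) by blast
    have q: "0 \<le> PrBY M b y" by (simp add: PrBY_def)
    show "0 \<le> vB_star M b y" unfolding vB_star_def using p q by simp
    show "vB_star M b y \<le> 1" unfolding vB_star_def using p le1[of b y] by simp
  next
    fix y
    show "(\<Sum>b\<in>UNIV. vB_star M b y) = 1" unfolding vB_star_def
      using assms(3)[rule_format, of y] by (simp add: sum_divide_distrib[symmetric] marg)
  qed
  define p where "p a = (\<lambda>b. PrAB M a b / PrA M a)" for a
  have ps: "p a \<in> prob_simplex" for a
    unfolding prob_simplex_def p_def mem_Collect_eq
    using assms(1)[rule_format, of a] marg(3)[of M a] by (auto simp: sum_divide_distrib[symmetric] PrAB_def less_imp_le)
  have abY: "PrABY M a b y = PrAY M a y * PrBY M b y / PrY M y" for a b y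
  proof -
    have "PrABY M a b y / PrY M y = (PrAY M a y / PrY M y) * (PrBY M b y / PrY M y)"
      using assms(4) unfolding cond_indep_def by blast
    thus ?thesis using assms(3)[rule_format, of y] by (simp add: field_simps)
  qed
  have qstar: "(\<lambda>b'. \<Sum>y\<in>UNIV. vB_star M b' y * hA_star M a y) = p a" for a
  proof
    fix b
    have "(\<Sum>y\<in>UNIV. vB_star M b y * hA_star M a y) = (\<Sum>y\<in>UNIV. PrABY M a b y / PrA M a)"
      by (rule sum.cong) (auto simp: vB_star_def hA_star_def abY)
    also have "\<dots> = PrAB M a b / PrA M a"
      by (simp add: sum_divide_distrib[symmetric] Pr_eqs)
    finally show "(\<Sum>y\<in>UNIV. vB_star M b y * hA_star M a y) = p a b" by (simp add: p_def)
  qed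
  have G: "G_PS PS M hA vB = (\<Sum>a\<in>UNIV. PrA M a * (\<Sum>b\<in>UNIV. p a b * PS b (\<lambda>b'. \<Sum>y\<in>UNIV. vB b' y * hA a y)))" for hA vB
    unfolding G_PS_def p_def using assms(1)
    by (auto simp: sum_distrib_left intro!: sum.cong) (metis less_irrefl)
  have A3: "G_PS PS M hA vB \<le> G_PS PS M (hA_star M) (vB_star M)"
    if hA: "admissible_hA hA" and vB: "admissible_vB vB" for hA vB
  proof -
    have qs: "(\<lambda>b'. \<Sum>y\<in>UNIV. vB b' y * hA a y) \<in> prob_simplex" for a
    proof -
      have "(\<Sum>b\<in>UNIV. \<Sum>y\<in>UNIV. vB b y * hA a y) = (\<Sum>y\<in>UNIV. (\<Sum>b\<in>UNIV. vB b y) * hA a y)"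
        by (subst sum.swap) (simp add: sum_distrib_right)
      also have "\<dots> = 1" using vB hA unfolding admissible_vB_def admissible_hA_def prob_simplex_def by simp
      finally show ?thesis
        using vB hA unfolding admissible_vB_def admissible_hA_def prob_simplex_def
        by (auto intro!: sum_nonneg)
    qed
    show ?thesis
      unfolding G qstar
    proof (rule sum_mono, rule mult_left_mono)
      fix a
      show "(\<Sum>b\<in>UNIV. p a b * PS b (\<lambda>b'. \<Sum>y\<in>UNIV. vB b' y * hA a y)) \<le> (\<Sum>b\<in>UNIV. p a b * PS b (p a))"
        using assms(5) ps qs unfolding proper_scoring_rule_def by blast
      show "0 \<le> PrA M a" using assms(1) by (simp add: less_imp_le)
    qed
  qed
  show ?thesis using A1 A2 A3 by blast
qed

end
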